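(* For strictly positive formulas $A,B$, $A\vdash_{\mathbf{RC\omega}}B$ iff $\mathrm{RC}\omega_S[A]\Vdash B$ (truth at the root), where $S=\ell(\{A,B\})$.
   Context: Strictly positive formulas: $A::= p\mid \top\mid (A\land B)\mid \alpha A$, $\alpha\le\omega$; $\ell(X)$ is the set of modalities occurring in formulas of $X$. $\mathbf{RC\omega}$: $A\vdash A$; $A\vdash\top$; cut; $A\land B\vdash A$; $A\land B\vdash B$; from $A\vdash B$, $A\vdash C$ infer $A\vdash B\land C$; from $A\vdash B$ infer $\alpha A\vdash\alpha B$; $\alpha\alpha A\vdash\alpha A$; $\alpha\beta A\vdash\beta A$, $\beta\alpha A\vdash\beta A$ for $\alpha\ge\beta$; $\alpha A\land\beta B\vdash\alpha(A\land\beta B)$ for $\alpha>\beta$; $\alpha A\vdash\beta A$ for $\alpha>\beta$; $\omega A\vdash A$. Kripke models of signature $S$: $W$, relations $(R_\alpha)_{\alpha\in S}$, valuation $v$; $x\Vdash\alpha A$ iff $\exists y(xR_\alpha y\wedge y\Vdash A)$. RC$_S$-frame: for $\alpha,\beta\in S$, $R_\alpha R_\beta\subseteq R_{\min(\alpha,\beta)}$; for $\alpha>\beta$, $xR_\alpha y\wedge xR_\beta z\Rightarrow yR_\beta z$; and $R_\alpha\subseteq R_\beta$ for $\beta<\alpha$. The canonical tree $T[A]$: for a variable or $\top$, one node with empty relations where only that variable is true; $T[B\land C]$: disjoint union of $T[B],T[C]$ with roots identified, a variable true at the root iff true at either root; $T[\alpha B]$: $T[B]$ plus a new root $r$ (all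 variables false) with $rR_\alpha$(root of $T[B]$). $\mathrm{RC}_S[A]$ ($S\supseteq\ell(A)$) is $T[A]$ with its relations replaced by the least relations containing them that form an RC$_S$-frame. $\mathrm{RC}\omega_S[A]$ has the frame of $\mathrm{RC}_S[A]$ and valuation $v'$ with $v'(x,p)=1$ iff $v(x,p)=1$ or there is $y$ with $xR_\omega y$ and $v(y,p)=1$, where $v$ is the valuation of $\mathrm{RC}_S[A]$. *)

theory Defs
  imports Main "HOL-Library.Extended_Nat"
begin

text \<open>Modalities are ordinals \<open>\<alpha> \<le> \<omega>\<close>, represented by \<open>enat\<close>,
  where \<open>\<infinity>\<close> plays the role of \<open>\<omega>\<close>.\<close>

datatype 'a fm = Var 'a | Top | And "'a fm" "'a fm" | Dia enat "'a fm"

fun mods :: "'a fm \<Rightarrow> enat set" where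
  "mods (Var p) = {}"
| "mods Top = {}"
| "mods (And A B) = mods A \<union> mods B"
| "mods (Dia a A) = insert a (mods A)"

inductive deriv :: "'a fm \<Rightarrow> 'a fm \<Rightarrow> bool" where
  ax: "deriv A A"
| top: "deriv A Top"
| cut: "deriv A B \<Longrightarrow> deriv B C \<Longrightarrow> deriv A C"
| andE1: "deriv (And A B) A"
| andE2: "deriv (And A B) B"
| andI: "deriv A B \<Longrightarrow> deriv A C \<Longrightarrow> deriv A (And B C)"
| nec: "deriv A B \<Longrightarrow> deriv (Dia a A) (Dia a B)"
| trans4: "deriv (Dia a (Dia a A)) (Dia a A)"
| mono1: "a \<ge> b \<Longrightarrow> deriv (Dia a (Dia b A)) (Dia b A)"
| mono2: "a \<ge> b \<Longrightarrow> deriv (Dia b (Dia a A)) (Dia b A)"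
| pull: "a > b \<Longrightarrow> deriv (And (Dia a A) (Dia b B)) (Dia a (And A (Dia b B)))"
| weak: "a > b \<Longrightarrow> deriv (Dia a A) (Dia b A)"
| omega: "deriv (Dia \<infinity> A) A"

record ('w, 'a) kmodel =
  worlds :: "'w set"
  rel :: "enat \<Rightarrow> ('w \<times> 'w) set"
  val :: "'w \<Rightarrow> 'a \<Rightarrow> bool"

fun sat :: "('w, 'a) kmodel \<Rightarrow> 'w \<Rightarrow> 'a fm \<Rightarrow> bool" where
  "sat M x (Var p) = val M x p"
| "sat M x Top = True"
| "sat M x (And A B) = (sat M x A \<and> sat M x B)"
| "sat M x (Dia a A) = (\<exists>y\<in>worlds M. (x, y) \<in> rel M a \<and> sat M y A)"

definition rc_frame :: "enat set \<Rightarrow> (enat \<Rightarrow> ('w \<times> 'w) set) \<Rightarrow> bool" where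
  "rc_frame S R \<longleftrightarrow>
     (\<forall>a\<in>S. \<forall>b\<in>S. R a O R b \<subseteq> R (min a b)) \<and>
     (\<forall>a\<in>S. \<forall>b\<in>S. a > b \<longrightarrow> (\<forall>x y z. (x, y) \<in> R a \<and> (x, z) \<in> R b \<longrightarrow> (y, z) \<in> R b)) \<and>
     (\<forall>a\<in>S. \<forall>b\<in>S. b < a \<longrightarrow> R a \<subseteq> R b)"

definition rc_closure :: "enat set \<Rightarrow> (enat \<Rightarrow> ('w \<times> 'w) set) \<Rightarrow> enat \<Rightarrow> ('w \<times> 'w) set" where
  "rc_closure S R a = {(x, y). \<forall>R'. (\<forall>b\<in>S. R b \<subseteq> R' b) \<and> rc_frame S R' \<longrightarrow> (x, y) \<in> R' a}"

text \<open>Canonical tree T[A]; nodes are lists of naturals, the root is []. In a conjunction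
  the non-root nodes of the two conjunct trees are tagged 0 and 1, the roots being identified.\<close>
definition tag :: "nat \<Rightarrow> nat list \<Rightarrow> nat list" where
  "tag i p = (if p = [] then [] else i # p)"

fun tnodes :: "'a fm \<Rightarrow> nat list set" where
  "tnodes (Var p) = {[]}"
| "tnodes Top = {[]}"
| "tnodes (And B C) = tag 0 ` tnodes B \<union> tag 1 ` tnodes C"
| "tnodes (Dia a B) = insert [] ((#) 0 ` tnodes B)"

fun trel :: "'a fm \<Rightarrow> enat \<Rightarrow> (nat list \<times> nat list) set" where
  "trel (Var p) b = {}"
| "trel Top b = {}"
| "trel (And B C) b = map_prod (tag 0) (tag 0) ` trel B b \<union> map_prod (tag 1) (tag 1) ` trel C b"
| "trel (Dia a B) b = (if b = a then {([], [0])} else {}) \<union> map_prod ((#) 0) ((#) 0) ` trel B b"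

fun tval :: "'a fm \<Rightarrow> nat list \<Rightarrow> 'a \<Rightarrow> bool" where
  "tval (Var q) x p = (x = [] \<and> p = q)"
| "tval Top x p = False"
| "tval (And B C) x p = ((\<exists>y\<in>tnodes B. x = tag 0 y \<and> tval B y p) \<or> (\<exists>y\<in>tnodes C. x = tag 1 y \<and> tval C y p))"
| "tval (Dia a B) x p = (\<exists>y\<in>tnodes B. x = 0 # y \<and> tval B y p)"

definition tree :: "'a fm \<Rightarrow> (nat list, 'a) kmodel" where
  "tree A = \<lparr>worlds = tnodes A, rel = trel A, val = tval A\<rparr>"

definition RC_model :: "enat set \<Rightarrow> 'a fm \<Rightarrow> (nat list, 'a) kmodel" where
  "RC_model S A = \<lparr>worlds = tnodes A, rel = rc_closure S (trel A), val = tval A\<rparr>"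

text \<open>RC\<omega>_S[A]: same frame, valuation closed backwards along R_\<omega>
  (R_\<omega> is empty when \<omega> \<notin> S).\<close>
definition RCw_model :: "enat set \<Rightarrow> 'a fm \<Rightarrow> (nat list, 'a) kmodel" where
  "RCw_model S A = \<lparr>worlds = tnodes A, rel = rc_closure S (trel A),
     val = (\<lambda>x p. tval A x p \<or> (\<exists>y\<in>tnodes A. (x, y) \<in> rc_closure S (trel A) \<infinity> \<and> tval A y p))\<rparr>"

end

theory Submission
  imports Defs
begin

lemma rcf_comp: "rc_frame S R \<Longrightarrow> a\<in>S \<Longrightarrow> b\<in>S \<Longrightarrow> (x,y) \<in> R a \<Longrightarrow> (y,z) \<in> R b \<Longrightarrow> (x,z) \<in> R (min a b)"
  unfolding rc_frame_def by blast

lemma rcf_eucl: "rc_frame S R \<Longrightarrow> a\<in>S \<Longrightarrow> b\<in>S \<Longrightarrow> b < a \<Longrightarrow> (x,y) \<in> R a \<Longrightarrow> (x,z) \<in> R b \<Longrightarrow> (y,z) \<in> R b"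
  unfolding rc_frame_def by blast

lemma rcf_incl: "rc_frame S R \<Longrightarrow> a\<in>S \<Longrightarrow> b\<in>S \<Longrightarrow> b < a \<Longrightarrow> (x,y) \<in> R a \<Longrightarrow> (x,y) \<in> R b"
  unfolding rc_frame_def by blast

lemma rcf_mono: "rc_frame T R \<Longrightarrow> S \<subseteq> T \<Longrightarrow> rc_frame S R"
  unfolding rc_frame_def by blast

section \<open>Soundness for full models\<close>

definition full :: "('w,'a) kmodel \<Rightarrow> bool" where
  "full M \<longleftrightarrow> rc_frame UNIV (rel M) \<and>
     (\<forall>x y p. (x,y) \<in> rel M \<infinity> \<longrightarrow> y \<in> worlds M \<longrightarrow> val M y p \<longrightarrow> val M x p)"

lemma sat_omega:
  assumes "full M"
  shows "(x,y) \<in> rel M \<infinity> \<Longrightarrow> y \<in> worlds M \<Longrightarrow> sat M y A \<Longrightarrow> sat M x A"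
proof (induction A arbitrary: x y)
  case (Var p) then show ?case using assms unfolding full_def by auto
next
  case Top then show ?case by simp
next
  case (And A B) then show ?case by auto
next
  case (Dia c A)
  then obtain z where z: "z \<in> worlds M" "(y,z) \<in> rel M c" "sat M z A" by auto
  have "(x,z) \<in> rel M (min \<infinity> c)"
    using rcf_comp[of UNIV "rel M" \<infinity> c x y z] assms Dia.prems z unfolding full_def by auto
  then show ?case using z by auto
qed

lemma soundness:
  assumes "full M"
  shows "deriv A B \<Longrightarrow> sat M x A \<Longrightarrow> sat M x B"
proof (induction arbitrary: x rule: deriv.induct)
  case (trans4 a A)
  then obtain y z where "y \<in> worlds M" "(x,y) \<in> rel M a" "z \<in> worlds M" "(y,z) \<in> rel M a" "sat M z A" by auto
  moreover have "(x,z) \<in> rel M (min a a)"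
    using rcf_comp[of UNIV "rel M" a a x y z] assms calculation unfolding full_def by auto
  ultimately show ?case by auto
next
  case (mono1 a b A)
  then obtain y z where "y \<in> worlds M" "(x,y) \<in> rel M a" "z \<in> worlds M" "(y,z) \<in> rel M b" "sat M z A" by auto
  moreover have "(x,z) \<in> rel M (min a b)"
    using rcf_comp[of UNIV "rel M" a b x y z] assms calculation unfolding full_def by auto
  ultimately show ?case using mono1(1) by (auto simp: min_absorb2)
next
  case (mono2 a b A)
  then obtain y z where "y \<in> worlds M" "(x,y) \<in> rel M b" "z \<in> worlds M" "(y,z) \<in> rel M a" "sat M z A" by auto
  moreover have "(x,z) \<in> rel M (min b a)"
    using rcf_comp[of UNIV "rel M" b a x y z] assms calculation unfolding full_def by auto
  ultimately show ?case using mono2(1) by (auto simp: min_absorb1)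
next
  case (pull a b A B)
  then obtain y z where "y \<in> worlds M" "(x,y) \<in> rel M a" "sat M y A" "z \<in> worlds M" "(x,z) \<in> rel M b" "sat M z B" by auto
  moreover have "(y,z) \<in> rel M b"
    using rcf_eucl[of UNIV "rel M" a b x y z] assms calculation pull(1) unfolding full_def by auto
  ultimately show ?case by auto
next
  case (weak a b A)
  then show ?case using rcf_incl[of UNIV "rel M" a b x] assms unfolding full_def by auto
next
  case (omega A)
  then show ?case using sat_omega[OF assms] by auto
qed auto


section \<open>Canonical model\<close>

definition thy :: "'a fm set \<Rightarrow> bool" where
  "thy X \<longleftrightarrow> Top \<in> X \<and> (\<forall>\<phi> \<psi>. \<phi> \<in> X \<longrightarrow> deriv \<phi> \<psi> \<longrightarrow> \<psi> \<in> X)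
     \<and> (\<forall>\<phi> \<psi>. \<phi> \<in> X \<longrightarrow> \<psi> \<in> X \<longrightarrow> And \<phi> \<psi> \<in> X)"

definition can :: "('a fm set, 'a) kmodel" where
  "can = \<lparr>worlds = {X. thy X},
     rel = (\<lambda>a. {(X,Y). thy X \<and> thy Y \<and> (\<forall>\<phi>\<in>Y. Dia a \<phi> \<in> X) \<and>
                 (\<forall>b \<phi>. b < a \<longrightarrow> Dia b \<phi> \<in> X \<longrightarrow> Dia b \<phi> \<in> Y)}),
     val = (\<lambda>X p. Var p \<in> X)\<rparr>"

lemma th_deriv: "thy X \<Longrightarrow> \<phi> \<in> X \<Longrightarrow> deriv \<phi> \<psi> \<Longrightarrow> \<psi> \<in> X"
  unfolding thy_def by blast

lemma th_and: "thy X \<Longrightarrow> \<phi> \<in> X \<Longrightarrow> \<psi> \<in> X \<Longrightarrow> And \<phi> \<psi> \<in> X"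
  unfolding thy_def by blast

lemma th_top: "thy X \<Longrightarrow> Top \<in> X"
  unfolding thy_def by blast

lemma deriv_trans: "deriv A B \<Longrightarrow> deriv B C \<Longrightarrow> deriv A C" by (rule deriv.cut)

lemma can_full: "full can"
  unfolding full_def rc_frame_def
proof (intro conjI ballI allI impI)
  fix a b :: enat
  show "rel can a O rel can b \<subseteq> rel can (min a b)"
  proof
    fix p assume "p \<in> rel can a O rel can b"
    then obtain X Y Z where p: "p = (X,Z)" and XY: "(X,Y) \<in> rel can a" and YZ: "(Y,Z) \<in> rel can b" by auto
    have tX: "thy X" and tY: "thy Y" and tZ: "thy Z" using XY YZ unfolding can_def by auto
    have 1: "\<forall>\<phi>\<in>Z. Dia (min a b) \<phi> \<in> X"
    proof
      fix \<phi> assume "\<phi> \<in> Z"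
      then have "Dia b \<phi> \<in> Y" using YZ unfolding can_def by auto
      then have "Dia a (Dia b \<phi>) \<in> X" using XY unfolding can_def by auto
      moreover have "deriv (Dia a (Dia b \<phi>)) (Dia (min a b) \<phi>)"
      proof (cases "a \<le> b")
        case True
        have "deriv (Dia a (Dia b \<phi>)) (Dia a (Dia a \<phi>))"
        proof (cases "a = b")
          case True then show ?thesis by (simp add: deriv.ax)
        next
          case False then have "b > a" using \<open>a \<le> b\<close> by simp
          then show ?thesis by (intro deriv.nec deriv.weak)
        qed
        then show ?thesis using True deriv.trans4 deriv_trans by (simp add: min_absorb1) blast
      next
        case False then show ?thesis using deriv.mono1[of b a \<phi>] by (simp add: min_absorb2)
      qed
      ultimately show "Dia (min a b) \<phi> \<in> X" using th_deriv tX by blast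
    qed
    have 2: "\<forall>c \<phi>. c < min a b \<longrightarrow> Dia c \<phi> \<in> X \<longrightarrow> Dia c \<phi> \<in> Z"
      using XY YZ unfolding can_def by auto
    show "p \<in> rel can (min a b)" using 1 2 tX tZ p unfolding can_def by auto
  qed
next
  fix a b :: enat and x y z
  assume ab: "a > b" and xy: "(x,y) \<in> rel can a \<and> (x,z) \<in> rel can b"
  have tX: "thy x" and tY: "thy y" and tZ: "thy z" using xy unfolding can_def by auto
  have 1: "\<forall>\<phi>\<in>z. Dia b \<phi> \<in> y" using xy ab unfolding can_def by auto
  have 2: "\<forall>c \<phi>. c < b \<longrightarrow> Dia c \<phi> \<in> y \<longrightarrow> Dia c \<phi> \<in> z"
  proof (intro allI impI)
    fix c \<phi> assume cb: "c < b" and "Dia c \<phi> \<in> y"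
    then have "Dia a (Dia c \<phi>) \<in> x" using xy unfolding can_def by auto
    then have "Dia c \<phi> \<in> x" using th_deriv[OF tX _ deriv.mono1[of c a \<phi>]] cb ab by auto
    then show "Dia c \<phi> \<in> z" using xy cb unfolding can_def by auto
  qed
  show "(y,z) \<in> rel can b" using 1 2 tY tZ unfolding can_def by auto
next
  fix a b :: enat assume ab: "b < a"
  show "rel can a \<subseteq> rel can b"
  proof
    fix p assume p: "p \<in> rel can a"
    then obtain X Y where pe: "p = (X,Y)" by (cases p)
    have tX: "thy X" using p pe unfolding can_def by auto
    have "\<forall>\<phi>\<in>Y. Dia b \<phi> \<in> X" using p pe th_deriv[OF tX _ deriv.weak[OF ab]] unfolding can_def by auto
    then show "p \<in> rel can b" using p pe ab unfolding can_def by auto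
  qed
next
  fix x y p assume "(x,y) \<in> rel can \<infinity>" "y \<in> worlds can" "val can y p"
  then show "val can x p" using th_deriv[of x "Dia \<infinity> (Var p)" "Var p"] deriv.omega unfolding can_def by auto
qed

inductive pullable :: "enat \<Rightarrow> 'a fm set \<Rightarrow> 'a fm \<Rightarrow> bool" for a X where
  "pullable a X Top"
| "b < a \<Longrightarrow> Dia b \<psi> \<in> X \<Longrightarrow> pullable a X (Dia b \<psi>)"
| "pullable a X \<theta>1 \<Longrightarrow> pullable a X \<theta>2 \<Longrightarrow> pullable a X (And \<theta>1 \<theta>2)"

lemma pullable_in: "pullable a X \<theta> \<Longrightarrow> thy X \<Longrightarrow> \<theta> \<in> X"
  by (induction rule: pullable.induct) (auto intro: th_top th_and)

lemma pullable_deriv: "pullable a X \<theta> \<Longrightarrow> deriv (And (Dia a \<phi>) \<theta>) (Dia a (And \<phi> \<theta>))"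
proof (induction \<theta> arbitrary: \<phi> rule: pullable.induct)
  case 1
  show ?case by (meson deriv.andE1 deriv.andI deriv.ax deriv.cut deriv.nec deriv.top)
next
  case (2 b \<psi>) then show ?case by (simp add: deriv.pull)
next
  case (3 \<theta>1 \<theta>2)
  have a: "deriv (And (Dia a \<phi>) (And \<theta>1 \<theta>2)) (And (Dia a (And \<phi> \<theta>1)) \<theta>2)"
    by (meson "3.IH"(1) deriv.andE1 deriv.andE2 deriv.andI deriv.cut)
  have b: "deriv (And (Dia a (And \<phi> \<theta>1)) \<theta>2) (Dia a (And (And \<phi> \<theta>1) \<theta>2))" by (rule "3.IH"(2))
  have c: "deriv (And (And \<phi> \<theta>1) \<theta>2) (And \<phi> (And \<theta>1 \<theta>2))"
    by (meson deriv.andE1 deriv.andE2 deriv.andI deriv.cut)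
  show ?case by (meson a b c deriv.cut deriv.nec)
qed

lemma truth: "thy X \<Longrightarrow> sat can X \<phi> \<longleftrightarrow> \<phi> \<in> X"
proof (induction \<phi> arbitrary: X)
  case (Var p) then show ?case by (simp add: can_def)
next
  case Top then show ?case by (simp add: th_top)
next
  case (And A B) then show ?case by (meson deriv.andE1 deriv.andE2 sat.simps(3) th_and th_deriv)
next
  case (Dia a \<phi>)
  show ?case
  proof
    assume "sat can X (Dia a \<phi>)"
    then obtain Y where "Y \<in> worlds can" "(X,Y) \<in> rel can a" "sat can Y \<phi>" by auto
    then show "Dia a \<phi> \<in> X" using Dia.IH unfolding can_def by auto
  next
    assume aX: "Dia a \<phi> \<in> X"
    define Y where "Y = {\<chi>. \<exists>\<theta>. pullable a X \<theta> \<and> deriv (And \<phi> \<theta>) \<chi>}"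
    have pY: "pullable a X \<theta> \<Longrightarrow> deriv (And \<phi> \<theta>) \<chi> \<Longrightarrow> \<chi> \<in> Y" for \<theta> \<chi> unfolding Y_def by auto
    have tY: "thy Y" unfolding thy_def
    proof (intro conjI allI impI)
      show "Top \<in> Y" using pY[OF pullable.intros(1) deriv.top] .
    next
      fix \<phi>' \<psi> assume "\<phi>' \<in> Y" "deriv \<phi>' \<psi>"
      then show "\<psi> \<in> Y" unfolding Y_def using deriv.cut by blast
    next
      fix \<phi>' \<psi> assume "\<phi>' \<in> Y" "\<psi> \<in> Y"
      then obtain \<theta>1 \<theta>2 where t: "pullable a X \<theta>1" "deriv (And \<phi> \<theta>1) \<phi>'" "pullable a X \<theta>2" "deriv (And \<phi> \<theta>2) \<psi>"
        unfolding Y_def by auto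
      have "deriv (And \<phi> (And \<theta>1 \<theta>2)) \<phi>'"
        by (meson t deriv.andE1 deriv.andE2 deriv.andI deriv.cut)
      moreover have "deriv (And \<phi> (And \<theta>1 \<theta>2)) \<psi>"
        by (meson t deriv.andE1 deriv.andE2 deriv.andI deriv.cut)
      ultimately show "And \<phi>' \<psi> \<in> Y"
        using pY[OF pullable.intros(3)[OF t(1) t(3)]] deriv.andI by blast
    qed
    have phiY: "\<phi> \<in> Y" using pY[OF pullable.intros(1) deriv.andE1] .
    have XY: "(X,Y) \<in> rel can a"
    proof -
      have "\<forall>\<chi>\<in>Y. Dia a \<chi> \<in> X"
      proof
        fix \<chi> assume "\<chi> \<in> Y"
        then obtain \<theta> where t: "pullable a X \<theta>" "deriv (And \<phi> \<theta>) \<chi>" unfolding Y_def by auto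
        have "And (Dia a \<phi>) \<theta> \<in> X" using th_and[OF Dia.prems aX pullable_in[OF t(1) Dia.prems]] .
        then have "Dia a (And \<phi> \<theta>) \<in> X" using th_deriv[OF Dia.prems _ pullable_deriv[OF t(1)]] by blast
        then show "Dia a \<chi> \<in> X" using th_deriv[OF Dia.prems _ deriv.nec[OF t(2)]] by blast
      qed
      moreover have "\<forall>b \<psi>. b < a \<longrightarrow> Dia b \<psi> \<in> X \<longrightarrow> Dia b \<psi> \<in> Y"
        using pY[OF pullable.intros(2) deriv.andE2] by blast
      ultimately show ?thesis using tY Dia.prems unfolding can_def by auto
    qed
    show "sat can X (Dia a \<phi>)" using XY tY phiY Dia.IH[OF tY] by (auto simp: can_def)
  qed
qed


lemma root_in: "[] \<in> tnodes A"
  by (induction A) (auto simp: tag_def image_iff)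

lemma tag_eq: "tag i x = tag i y \<Longrightarrow> x = y"
  by (auto simp: tag_def split: if_splits)

lemma trel_props: "(x,y) \<in> trel A c \<Longrightarrow> c \<in> mods A \<and> x \<in> tnodes A \<and> y \<in> tnodes A \<and> y \<noteq> []"
  by (induction A arbitrary: x y) (auto simp: tag_def root_in split: if_splits)

lemma tag_hd: "tag 0 y = tag 1 z \<Longrightarrow> y = [] \<and> z = []"
  by (auto simp: tag_def split: if_splits)

lemma unique_parent: "(u,y) \<in> trel A c \<Longrightarrow> (v,y) \<in> trel A d \<Longrightarrow> u = v"
proof (induction A arbitrary: u v y)
  case (And B C)
  from And.prems(1) consider u' y' where "(u',y') \<in> trel B c" "u = tag 0 u'" "y = tag 0 y'"
      | u' y' where "(u',y') \<in> trel C c" "u = tag 1 u'" "y = tag 1 y'" by auto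
  then show ?case
  proof cases
    case 1
    from And.prems(2) consider v' y'' where "(v',y'') \<in> trel B d" "v = tag 0 v'" "y = tag 0 y''"
      | v' y'' where "(v',y'') \<in> trel C d" "v = tag 1 v'" "y = tag 1 y''" by auto
    then show ?thesis
    proof cases
      case a: 1
      then have "y' = y''" using 1 tag_eq by metis
      then show ?thesis using And.IH(1) 1 a by metis
    next
      case a: 2
      then show ?thesis using 1 tag_hd trel_props by metis
    qed
  next
    case 2
    from And.prems(2) consider v' y'' where "(v',y'') \<in> trel B d" "v = tag 0 v'" "y = tag 0 y''"
      | v' y'' where "(v',y'') \<in> trel C d" "v = tag 1 v'" "y = tag 1 y''" by auto
    then show ?thesis
    proof cases
      case a: 1
      then show ?thesis using 2 tag_hd trel_props by metis
    next
      case a: 2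
      then have "y' = y''" using 2 tag_eq by metis
      then show ?thesis using And.IH(2) 2 a by metis
    qed
  qed
next
  case (Dia a B)
  from Dia.prems(1) consider "u = []" "y = [0]"
      | u' y' where "(u',y') \<in> trel B c" "u = 0 # u'" "y = 0 # y'" by (auto split: if_splits)
  then show ?case
  proof cases
    case 1
    from Dia.prems(2) consider "v = []" "y = [0]"
      | v' y'' where "(v',y'') \<in> trel B d" "v = 0 # v'" "y = 0 # y''" by (auto split: if_splits)
    then show ?thesis by cases (use 1 trel_props in auto)
  next
    case 2
    from Dia.prems(2) consider "v = []" "y = [0]"
      | v' y'' where "(v',y'') \<in> trel B d" "v = 0 # v'" "y = 0 # y''" by (auto split: if_splits)
    then show ?thesis by cases (use 2 trel_props Dia.IH in auto)
  qed
qed auto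

lemma tree_sat:
  "(\<forall>x\<in>tnodes A. f x \<in> worlds N) \<Longrightarrow> (\<forall>b x y. (x,y) \<in> trel A b \<longrightarrow> (f x, f y) \<in> rel N b) \<Longrightarrow>
   (\<forall>x p. x \<in> tnodes A \<longrightarrow> tval A x p \<longrightarrow> val N (f x) p) \<Longrightarrow> sat N (f []) A"
proof (induction A arbitrary: f)
  case (Var q) then show ?case by auto
next
  case Top then show ?case by simp
next
  case (And B C)
  have "sat N ((f \<circ> tag 0) []) B"
  proof (rule And.IH(1))
    show "\<forall>x\<in>tnodes B. (f \<circ> tag 0) x \<in> worlds N" using And.prems(1) by auto
    show "\<forall>b x y. (x,y) \<in> trel B b \<longrightarrow> ((f \<circ> tag 0) x, (f \<circ> tag 0) y) \<in> rel N b"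
    proof (intro allI impI)
      fix b x y assume "(x,y) \<in> trel B b"
      then have e: "(tag 0 x, tag 0 y) \<in> trel (And B C) b" by force
      show "((f \<circ> tag 0) x, (f \<circ> tag 0) y) \<in> rel N b" using And.prems(2)[rule_format, OF e] by simp
    qed
    show "\<forall>x p. x \<in> tnodes B \<longrightarrow> tval B x p \<longrightarrow> val N ((f \<circ> tag 0) x) p"
    proof (intro allI impI)
      fix x p assume "x \<in> tnodes B" "tval B x p"
      then have e: "tag 0 x \<in> tnodes (And B C)" "tval (And B C) (tag 0 x) p" by auto
      show "val N ((f \<circ> tag 0) x) p" using And.prems(3)[rule_format, OF e] by simp
    qed
  qed
  moreover have "sat N ((f \<circ> tag 1) []) C"
  proof (rule And.IH(2))
    show "\<forall>x\<in>tnodes C. (f \<circ> tag 1) x \<in> worlds N" using And.prems(1) by auto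
    show "\<forall>b x y. (x,y) \<in> trel C b \<longrightarrow> ((f \<circ> tag 1) x, (f \<circ> tag 1) y) \<in> rel N b"
    proof (intro allI impI)
      fix b x y assume "(x,y) \<in> trel C b"
      then have e: "(tag 1 x, tag 1 y) \<in> trel (And B C) b" by force
      show "((f \<circ> tag 1) x, (f \<circ> tag 1) y) \<in> rel N b" using And.prems(2)[rule_format, OF e] by simp
    qed
    show "\<forall>x p. x \<in> tnodes C \<longrightarrow> tval C x p \<longrightarrow> val N ((f \<circ> tag 1) x) p"
    proof (intro allI impI)
      fix x p assume "x \<in> tnodes C" "tval C x p"
      then have e: "tag 1 x \<in> tnodes (And B C)" "tval (And B C) (tag 1 x) p" by auto
      show "val N ((f \<circ> tag 1) x) p" using And.prems(3)[rule_format, OF e] by simp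
    qed
  qed
  ultimately show ?case by (simp add: tag_def)
next
  case (Dia a B)
  have "sat N ((f \<circ> (#) 0) []) B"
  proof (rule Dia.IH)
    show "\<forall>x\<in>tnodes B. (f \<circ> (#) 0) x \<in> worlds N" using Dia.prems(1) by auto
    show "\<forall>b x y. (x,y) \<in> trel B b \<longrightarrow> ((f \<circ> (#) 0) x, (f \<circ> (#) 0) y) \<in> rel N b"
    proof (intro allI impI)
      fix b x y assume "(x,y) \<in> trel B b"
      then have e: "(0#x, 0#y) \<in> trel (Dia a B) b" by force
      show "((f \<circ> (#) 0) x, (f \<circ> (#) 0) y) \<in> rel N b" using Dia.prems(2)[rule_format, OF e] by simp
    qed
    show "\<forall>x p. x \<in> tnodes B \<longrightarrow> tval B x p \<longrightarrow> val N ((f \<circ> (#) 0) x) p"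
    proof (intro allI impI)
      fix x p assume "x \<in> tnodes B" "tval B x p"
      then have e: "0#x \<in> tnodes (Dia a B)" "tval (Dia a B) (0#x) p" by auto
      show "val N ((f \<circ> (#) 0) x) p" using Dia.prems(3)[rule_format, OF e] by simp
    qed
  qed
  moreover have "(f [], f [0]) \<in> rel N a" using Dia.prems(2) by auto
  moreover have "f [0] \<in> worlds N" using Dia.prems(1) root_in[of B] by auto
  ultimately show ?case by auto
qed

lemma embed:
  "n \<in> worlds N \<Longrightarrow> sat N n A \<Longrightarrow> \<exists>f. f [] = n \<and> (\<forall>x\<in>tnodes A. f x \<in> worlds N) \<and>
     (\<forall>b x y. (x,y) \<in> trel A b \<longrightarrow> (f x, f y) \<in> rel N b) \<and>
     (\<forall>x p. x \<in> tnodes A \<longrightarrow> tval A x p \<longrightarrow> val N (f x) p)"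
proof (induction A arbitrary: n)
  case (Var q) then show ?case by (intro exI[of _ "\<lambda>_. n"]) auto
next
  case Top then show ?case by (intro exI[of _ "\<lambda>_. n"]) auto
next
  case (And B C)
  obtain fB where fB: "fB [] = n" "\<forall>x\<in>tnodes B. fB x \<in> worlds N"
     "\<forall>b x y. (x,y) \<in> trel B b \<longrightarrow> (fB x, fB y) \<in> rel N b"
     "\<forall>x p. x \<in> tnodes B \<longrightarrow> tval B x p \<longrightarrow> val N (fB x) p" using And.IH(1)[OF And.prems(1)] And.prems(2) by auto
  obtain fC where fC: "fC [] = n" "\<forall>x\<in>tnodes C. fC x \<in> worlds N"
     "\<forall>b x y. (x,y) \<in> trel C b \<longrightarrow> (fC x, fC y) \<in> rel N b"
     "\<forall>x p. x \<in> tnodes C \<longrightarrow> tval C x p \<longrightarrow> val N (fC x) p" using And.IH(2)[OF And.prems(1)] And.prems(2) by auto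
  define f where "f x = (if x = [] then n else if hd x = 0 then fB (tl x) else fC (tl x))" for x
  have e0: "f (tag 0 y) = fB y" for y using fB(1) by (simp add: f_def tag_def)
  have e1: "f (tag 1 y) = fC y" for y using fC(1) by (simp add: f_def tag_def)
  have w: "\<forall>x\<in>tnodes (And B C). f x \<in> worlds N" using fB(2) fC(2) e0 e1 by auto
  have r: "\<forall>b x y. (x,y) \<in> trel (And B C) b \<longrightarrow> (f x, f y) \<in> rel N b"
  proof (intro allI impI)
    fix b x y assume "(x,y) \<in> trel (And B C) b"
    then consider x' y' where "(x',y') \<in> trel B b" "x = tag 0 x'" "y = tag 0 y'"
      | x' y' where "(x',y') \<in> trel C b" "x = tag 1 x'" "y = tag 1 y'" by auto
    then show "(f x, f y) \<in> rel N b" by cases (use fB(3) fC(3) e0 e1 in auto)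
  qed
  have v: "\<forall>x p. x \<in> tnodes (And B C) \<longrightarrow> tval (And B C) x p \<longrightarrow> val N (f x) p"
    using fB(4) fC(4) e0 e1 by auto
  have "f [] = n" by (simp add: f_def)
  then show ?case using w r v by blast
next
  case (Dia a B)
  then obtain m where m: "m \<in> worlds N" "(n,m) \<in> rel N a" "sat N m B" by auto
  obtain fB where fB: "fB [] = m" "\<forall>x\<in>tnodes B. fB x \<in> worlds N"
     "\<forall>b x y. (x,y) \<in> trel B b \<longrightarrow> (fB x, fB y) \<in> rel N b"
     "\<forall>x p. x \<in> tnodes B \<longrightarrow> tval B x p \<longrightarrow> val N (fB x) p" using Dia.IH m by blast
  define f where "f x = (if x = [] then n else fB (tl x))" for x
  have e0: "f (0 # y) = fB y" for y by (simp add: f_def)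
  have w: "\<forall>x\<in>tnodes (Dia a B). f x \<in> worlds N" using fB(2) e0 Dia.prems(1) by (auto simp: f_def)
  have r: "\<forall>b x y. (x,y) \<in> trel (Dia a B) b \<longrightarrow> (f x, f y) \<in> rel N b"
  proof (intro allI impI)
    fix b x y assume "(x,y) \<in> trel (Dia a B) b"
    then consider "b = a" "x = []" "y = [0]"
      | x' y' where "(x',y') \<in> trel B b" "x = 0 # x'" "y = 0 # y'" by (auto split: if_splits)
    then show "(f x, f y) \<in> rel N b" by cases (use fB(1,3) e0 m in \<open>auto simp: f_def\<close>)
  qed
  have v: "\<forall>x p. x \<in> tnodes (Dia a B) \<longrightarrow> tval (Dia a B) x p \<longrightarrow> val N (f x) p"
    using fB(4) e0 by auto
  have "f [] = n" by (simp add: f_def)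
  then show ?case using w r v by blast
qed

lemma closure_pre:
  assumes "rc_frame UNIV (rel N)" "\<forall>b x y. (x,y) \<in> trel A b \<longrightarrow> (f x, f y) \<in> rel N b"
  shows "(x,y) \<in> rc_closure S (trel A) b \<Longrightarrow> (f x, f y) \<in> rel N b"
proof -
  assume h: "(x,y) \<in> rc_closure S (trel A) b"
  define P where "P = (\<lambda>c. {(u,v). (f u, f v) \<in> rel N c})"
  have "rc_frame S P" unfolding rc_frame_def
  proof (intro conjI ballI allI impI subsetI)
    fix a b p assume "p \<in> P a O P b"
    then obtain u v w where "p = (u,w)" "(f u, f v) \<in> rel N a" "(f v, f w) \<in> rel N b" by (auto simp: P_def)
    then show "p \<in> P (min a b)" using rcf_comp[OF assms(1), of a b "f u" "f v" "f w"] by (simp add: P_def)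
  next
    fix a b u v w assume "b < a" "(u,v) \<in> P a \<and> (u,w) \<in> P b"
    then show "(v,w) \<in> P b" using rcf_eucl[OF assms(1), of a b "f u" "f v" "f w"] by (simp add: P_def)
  next
    fix a b p assume "b < a" "p \<in> P a"
    then show "p \<in> P b" using rcf_incl[OF assms(1), of a b "f (fst p)" "f (snd p)"] by (auto simp: P_def)
  qed
  moreover have "\<forall>c\<in>S. trel A c \<subseteq> P c" using assms(2) by (auto simp: P_def)
  moreover have "\<forall>R'. (\<forall>c\<in>S. trel A c \<subseteq> R' c) \<and> rc_frame S R' \<longrightarrow> (x, y) \<in> R' b"
    using h by (simp add: rc_closure_def)
  ultimately have "(x,y) \<in> P b" by blast
  then show ?thesis by (simp add: P_def)
qed

lemma preserve:
  assumes "full N" "\<forall>x\<in>tnodes A. f x \<in> worlds N" "\<forall>b x y. (x,y) \<in> trel A b \<longrightarrow> (f x, f y) \<in> rel N b"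
     "\<forall>x p. x \<in> tnodes A \<longrightarrow> tval A x p \<longrightarrow> val N (f x) p"
  shows "x \<in> tnodes A \<Longrightarrow> sat (RCw_model S A) x B \<Longrightarrow> sat N (f x) B"
proof (induction B arbitrary: x)
  case (Var p)
  have fr: "rc_frame UNIV (rel N)" using assms(1) unfolding full_def by auto
  from Var show ?case
  proof (auto simp: RCw_model_def assms(4))
    fix y assume "y \<in> tnodes A" "(x,y) \<in> rc_closure S (trel A) \<infinity>" "tval A y p"
    then show "val N (f x) p"
      using closure_pre[OF fr assms(3)] assms(1,2,4) unfolding full_def by blast
  qed
next
  case Top then show ?case by simp
next
  case (And B C) then show ?case by auto
next
  case (Dia c B)
  have fr: "rc_frame UNIV (rel N)" using assms(1) unfolding full_def by auto
  from Dia.prems obtain y where y: "y \<in> tnodes A" "(x,y) \<in> rc_closure S (trel A) c" "sat (RCw_model S A) y B"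
    by (auto simp: RCw_model_def)
  have "(f x, f y) \<in> rel N c" using closure_pre[OF fr assms(3) y(2)] .
  moreover have "f y \<in> worlds N" using assms(2) y(1) by blast
  ultimately show ?case using Dia.IH[OF y(1) y(3)] by auto
qed

lemma completeness: "sat (RCw_model S A) [] B \<Longrightarrow> deriv A B"
proof -
  assume h: "sat (RCw_model S A) [] B"
  define X where "X = {\<chi>. deriv A \<chi>}"
  have tX: "thy X" unfolding thy_def X_def
  proof (intro conjI allI impI)
    show "Top \<in> {\<chi>. deriv A \<chi>}" by (simp add: deriv.top)
  next
    fix \<phi> \<psi> assume "\<phi> \<in> {\<chi>. deriv A \<chi>}" "deriv \<phi> \<psi>"
    then show "\<psi> \<in> {\<chi>. deriv A \<chi>}" using deriv.cut by auto
  next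
    fix \<phi> \<psi> assume "\<phi> \<in> {\<chi>. deriv A \<chi>}" "\<psi> \<in> {\<chi>. deriv A \<chi>}"
    then show "And \<phi> \<psi> \<in> {\<chi>. deriv A \<chi>}" using deriv.andI by auto
  qed
  have "A \<in> X" by (simp add: X_def deriv.ax)
  then have sA: "sat can X A" using truth[OF tX] by simp
  have wX: "X \<in> worlds can" using tX by (simp add: can_def)
  obtain f where f: "f [] = X" "\<forall>x\<in>tnodes A. f x \<in> worlds can"
     "\<forall>b x y. (x,y) \<in> trel A b \<longrightarrow> (f x, f y) \<in> rel can b"
     "\<forall>x p. x \<in> tnodes A \<longrightarrow> tval A x p \<longrightarrow> val can (f x) p"
    using embed[OF wX sA] by blast
  have "sat can (f []) B" using preserve[OF can_full f(2) f(3) f(4) root_in h] .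
  then have "B \<in> X" using truth[OF tX] f(1) by simp
  then show ?thesis by (simp add: X_def)
qed


section \<open>Explicit description of the closure\<close>

definition EE :: "'a fm \<Rightarrow> (enat \<Rightarrow> bool) \<Rightarrow> (nat list \<times> nat list) set" where
  "EE A P = {(u,v). \<exists>c. P c \<and> (u,v) \<in> trel A c}"

abbreviation GG where "GG A b \<equiv> EE A (\<lambda>c. b < c)"
abbreviation HH where "HH A b \<equiv> EE A (\<lambda>c. b \<le> c)"

definition QQ :: "'a fm \<Rightarrow> enat \<Rightarrow> (nat list \<times> nat list) set" where
  "QQ A b = {(x,y). \<exists>w. (w,x) \<in> (GG A b)\<^sup>* \<and> (w,y) \<in> (HH A b)\<^sup>+}"

lemma comparable:
  assumes up: "\<And>u v y. (u,y) \<in> E0 \<Longrightarrow> (v,y) \<in> E0 \<Longrightarrow> u = v" and PE: "P \<subseteq> E0" and RE: "R \<subseteq> E0"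
  shows "(w1,y) \<in> P\<^sup>* \<Longrightarrow> (w2,y) \<in> R\<^sup>* \<Longrightarrow> (w1,w2) \<in> P\<^sup>* \<or> (w2,w1) \<in> R\<^sup>*"
proof (induction arbitrary: w2 rule: rtrancl_induct)
  case base then show ?case by simp
next
  case (step u y)
  from step.prems show ?case
  proof (cases rule: rtranclE)
    case base then show ?thesis using step.hyps(1,2) by auto
  next
    case (step v)
    then have "v = u" using up PE RE \<open>(u,y) \<in> P\<close> by blast
    then show ?thesis using step.IH step(1) by blast
  qed
qed

lemma EE_mono: "(\<And>c. P c \<Longrightarrow> P' c) \<Longrightarrow> EE A P \<subseteq> EE A P'"
  unfolding EE_def by blast

lemma EE_up: "(u,y) \<in> EE A P \<Longrightarrow> (v,y) \<in> EE A P' \<Longrightarrow> u = v"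
  unfolding EE_def using unique_parent by blast

lemma comp_EE: "(w1,y) \<in> (EE A P)\<^sup>* \<Longrightarrow> (w2,y) \<in> (EE A P')\<^sup>* \<Longrightarrow>
   (w1,w2) \<in> (EE A P)\<^sup>* \<or> (w2,w1) \<in> (EE A P')\<^sup>*"
  by (rule comparable[of "EE A (\<lambda>_. True)"]) (auto simp: EE_def intro: unique_parent)

lemma QQI: "(w,x) \<in> (GG A b)\<^sup>* \<Longrightarrow> (w,y) \<in> (HH A b)\<^sup>+ \<Longrightarrow> (x,y) \<in> QQ A b"
  unfolding QQ_def by blast

lemma QQE: "(x,y) \<in> QQ A b \<Longrightarrow> (\<And>w. (w,x) \<in> (GG A b)\<^sup>* \<Longrightarrow> (w,y) \<in> (HH A b)\<^sup>+ \<Longrightarrow> P) \<Longrightarrow> P"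
  unfolding QQ_def by blast

lemma QQ_comp: "(x,y) \<in> QQ A a \<Longrightarrow> (y,z) \<in> QQ A b \<Longrightarrow> (x,z) \<in> QQ A (min a b)"
proof -
  assume xy: "(x,y) \<in> QQ A a" and yz: "(y,z) \<in> QQ A b"
  obtain w1 where h1: "(w1,x) \<in> (GG A a)\<^sup>*" "(w1,y) \<in> (HH A a)\<^sup>+" using xy by (rule QQE)
  obtain w2 where h2: "(w2,y) \<in> (GG A b)\<^sup>*" "(w2,z) \<in> (HH A b)\<^sup>+" using yz by (rule QQE)
  define m where "m = min a b"
  have Ga: "GG A a \<subseteq> GG A m" "GG A b \<subseteq> GG A m" "HH A a \<subseteq> HH A m" "HH A b \<subseteq> HH A m"
    by (auto simp: m_def min_less_iff_disj min_le_iff_disj intro!: EE_mono)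
  have G1: "(w1,x) \<in> (GG A m)\<^sup>*" using h1(1) rtrancl_mono[OF Ga(1)] by blast
  have H2: "(w2,z) \<in> (HH A m)\<^sup>+" using h2(2) trancl_mono Ga(4) by blast
  from comp_EE[OF trancl_into_rtrancl[OF h1(2)] h2(1)]
  have "(x,z) \<in> QQ A m"
  proof
    assume "(w1,w2) \<in> (HH A a)\<^sup>*"
    then have "(w1,w2) \<in> (HH A m)\<^sup>*" using rtrancl_mono[OF Ga(3)] by blast
    then have "(w1,z) \<in> (HH A m)\<^sup>+" using H2 by (rule rtrancl_trancl_trancl)
    then show ?thesis using G1 by (rule QQI[rotated])
  next
    assume "(w2,w1) \<in> (GG A b)\<^sup>*"
    then have "(w2,w1) \<in> (GG A m)\<^sup>*" using rtrancl_mono[OF Ga(2)] by blast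
    then have "(w2,x) \<in> (GG A m)\<^sup>*" using G1 by (rule rtrancl_trans)
    then show ?thesis using H2 by (rule QQI)
  qed
  then show ?thesis by (simp add: m_def)
qed

lemma QQ_eucl: "b < a \<Longrightarrow> (x,y) \<in> QQ A a \<Longrightarrow> (x,z) \<in> QQ A b \<Longrightarrow> (y,z) \<in> QQ A b"
proof -
  assume ab: "b < a" and xy: "(x,y) \<in> QQ A a" and xz: "(x,z) \<in> QQ A b"
  obtain w1 where h1: "(w1,x) \<in> (GG A a)\<^sup>*" "(w1,y) \<in> (HH A a)\<^sup>+" using xy by (rule QQE)
  obtain w2 where h2: "(w2,x) \<in> (GG A b)\<^sup>*" "(w2,z) \<in> (HH A b)\<^sup>+" using xz by (rule QQE)
  have I: "HH A a \<subseteq> GG A b" "GG A a \<subseteq> HH A b"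
    using ab by (auto intro!: EE_mono)
  have Y: "(w1,y) \<in> (GG A b)\<^sup>*" using trancl_into_rtrancl[OF h1(2)] rtrancl_mono[OF I(1)] by blast
  from comp_EE[OF h1(1) h2(1)]
  show "(y,z) \<in> QQ A b"
  proof
    assume "(w1,w2) \<in> (GG A a)\<^sup>*"
    then have "(w1,w2) \<in> (HH A b)\<^sup>*" using rtrancl_mono[OF I(2)] by blast
    then have "(w1,z) \<in> (HH A b)\<^sup>+" using h2(2) by (rule rtrancl_trancl_trancl)
    then show ?thesis using Y by (rule QQI[rotated])
  next
    assume a1: "(w2,w1) \<in> (GG A b)\<^sup>*"
    then have "(w2,y) \<in> (GG A b)\<^sup>*" using Y by (rule rtrancl_trans)
    then show ?thesis using h2(2) by (rule QQI)
  qed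
qed

lemma QQ_incl: "b < a \<Longrightarrow> (x,y) \<in> QQ A a \<Longrightarrow> (x,y) \<in> QQ A b"
proof -
  assume ab: "b < a" and xy: "(x,y) \<in> QQ A a"
  have I: "GG A a \<subseteq> GG A b" "HH A a \<subseteq> HH A b" using ab by (auto intro!: EE_mono)
  obtain w where h: "(w,x) \<in> (GG A a)\<^sup>*" "(w,y) \<in> (HH A a)\<^sup>+" using xy by (rule QQE)
  have "(w,x) \<in> (GG A b)\<^sup>*" using h(1) rtrancl_mono[OF I(1)] by blast
  moreover have "(w,y) \<in> (HH A b)\<^sup>+" using h(2) trancl_mono I(2) by blast
  ultimately show ?thesis by (rule QQI)
qed

lemma QQ_frame: "rc_frame UNIV (QQ A)"
  unfolding rc_frame_def
proof (intro conjI ballI allI impI subsetI)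
  fix a b :: enat and p assume "p \<in> QQ A a O QQ A b"
  then show "p \<in> QQ A (min a b)" using QQ_comp by blast
next
  fix a b :: enat and x y z assume "b < a" "(x,y) \<in> QQ A a \<and> (x,z) \<in> QQ A b"
  then show "(y,z) \<in> QQ A b" using QQ_eucl by blast
next
  fix a b :: enat and p assume "b < a" "p \<in> QQ A a"
  then show "p \<in> QQ A b" using QQ_incl by (cases p) blast
qed

lemma trel_QQ: "(x,y) \<in> trel A b \<Longrightarrow> (x,y) \<in> QQ A b"
  unfolding QQ_def EE_def by blast

lemma closure_QQ: "(x,y) \<in> rc_closure S (trel A) b \<Longrightarrow> (x,y) \<in> QQ A b"
proof -
  assume "(x,y) \<in> rc_closure S (trel A) b"
  then have "\<forall>R'. (\<forall>c\<in>S. trel A c \<subseteq> R' c) \<and> rc_frame S R' \<longrightarrow> (x, y) \<in> R' b"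
    by (simp add: rc_closure_def)
  moreover have "rc_frame S (QQ A)" using QQ_frame rcf_mono by blast
  moreover have "\<forall>c\<in>S. trel A c \<subseteq> QQ A c" using trel_QQ by auto
  ultimately show ?thesis by blast
qed

lemma QQ_closure:
  assumes S: "mods A \<subseteq> S" and b: "b \<in> S" and xy: "(x,y) \<in> QQ A b"
  shows "(x,y) \<in> rc_closure S (trel A) b"
  unfolding rc_closure_def
proof (clarify)
  fix R' assume tr: "\<forall>c\<in>S. trel A c \<subseteq> R' c" and fr: "rc_frame S R'"
  have edge: "(u,v) \<in> R' b" if "(u,v) \<in> HH A b" for u v
  proof -
    from that obtain c where c: "b \<le> c" "(u,v) \<in> trel A c" unfolding EE_def by auto
    then have cS: "c \<in> S" using trel_props S by blast
    then have "(u,v) \<in> R' c" using tr c by auto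
    then show ?thesis using rcf_incl[OF fr cS b] c(1) by (cases "b = c") auto
  qed
  have down: "(u,v) \<in> (HH A b)\<^sup>+ \<Longrightarrow> (u,v) \<in> R' b" for u v
  proof (induction rule: trancl_induct)
    case (base v) then show ?case using edge by blast
  next
    case (step v z)
    then show ?case using rcf_comp[OF fr b b, of u v z] edge by simp
  qed
  have up: "(w,x') \<in> (GG A b)\<^sup>* \<Longrightarrow> (w,y') \<in> R' b \<Longrightarrow> (x',y') \<in> R' b" for w x' y'
  proof (induction arbitrary: y' rule: converse_rtrancl_induct)
    case base then show ?case by simp
  next
    case (step w u)
    from step.hyps(1) obtain c where c: "b < c" "(w,u) \<in> trel A c" unfolding EE_def by auto
    then have cS: "c \<in> S" using trel_props S by blast
    then have "(w,u) \<in> R' c" using tr c by auto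
    then have "(u,y') \<in> R' b" using rcf_eucl[OF fr cS b c(1)] step.prems by blast
    then show ?case using step.IH by blast
  qed
  from xy obtain w where "(w,x) \<in> (GG A b)\<^sup>*" "(w,y) \<in> (HH A b)\<^sup>+" unfolding QQ_def by blast
  then show "(x,y) \<in> R' b" using up down by blast
qed

lemma QQ_inf: "(x,y) \<in> QQ A \<infinity> \<Longrightarrow> \<infinity> \<in> mods A"
proof -
  assume "(x,y) \<in> QQ A \<infinity>"
  then obtain w where "(w,y) \<in> (HH A \<infinity>)\<^sup>+" unfolding QQ_def by blast
  then obtain u v where "(u,v) \<in> HH A \<infinity>" using tranclD by metis
  then obtain c where "\<infinity> \<le> c" "(u,v) \<in> trel A c" unfolding EE_def by auto
  then show ?thesis using trel_props by fastforce
qed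

definition Mf :: "enat set \<Rightarrow> 'a fm \<Rightarrow> (nat list, 'a) kmodel" where
  "Mf S A = \<lparr>worlds = tnodes A, rel = QQ A, val = val (RCw_model S A)\<rparr>"

lemma closure_eq: "mods A \<subseteq> S \<Longrightarrow> b \<in> S \<Longrightarrow> rc_closure S (trel A) b = QQ A b"
proof -
  assume "mods A \<subseteq> S" "b \<in> S"
  then show ?thesis using closure_QQ[of _ _ S A b] QQ_closure[of A S b] by auto
qed

lemma Mf_full: "mods A \<subseteq> S \<Longrightarrow> full (Mf S A)"
  unfolding full_def
proof (intro conjI allI impI)
  show "rc_frame UNIV (rel (Mf S A))" using QQ_frame by (simp add: Mf_def)
next
  fix x y p assume S: "mods A \<subseteq> S" and xy: "(x,y) \<in> rel (Mf S A) \<infinity>" and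
    y: "y \<in> worlds (Mf S A)" and v: "val (Mf S A) y p"
  have xy': "(x,y) \<in> QQ A \<infinity>" using xy by (simp add: Mf_def)
  then have iS: "\<infinity> \<in> S" using QQ_inf S by blast
  have ceq: "rc_closure S (trel A) \<infinity> = QQ A \<infinity>" using closure_eq[OF S iS] .
  from v have "tval A y p \<or> (\<exists>z\<in>tnodes A. (y,z) \<in> QQ A \<infinity> \<and> tval A z p)"
    by (simp add: Mf_def RCw_model_def ceq)
  then have "\<exists>z\<in>tnodes A. (x,z) \<in> QQ A \<infinity> \<and> tval A z p"
  proof
    assume "tval A y p" then show ?thesis using xy' y by (auto simp: Mf_def)
  next
    assume "\<exists>z\<in>tnodes A. (y,z) \<in> QQ A \<infinity> \<and> tval A z p"
    then obtain z where "z \<in> tnodes A" "(y,z) \<in> QQ A \<infinity>" "tval A z p" by blast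
    moreover have "(x,z) \<in> QQ A (min \<infinity> \<infinity>)" using QQ_comp xy' calculation(2) by blast
    ultimately show ?thesis by auto
  qed
  then show "val (Mf S A) x p" by (simp add: Mf_def RCw_model_def ceq)
qed

lemma Mf_transfer: "mods A \<subseteq> S \<Longrightarrow> mods B \<subseteq> S \<Longrightarrow> sat (Mf S A) x B \<longleftrightarrow> sat (RCw_model S A) x B"
proof (induction B arbitrary: x)
  case (Var p) then show ?case by (simp add: Mf_def)
next
  case Top then show ?case by simp
next
  case (And B C) then show ?case by simp
next
  case (Dia c B)
  then have cS: "c \<in> S" by simp
  have "rel (Mf S A) c = rel (RCw_model S A) c" using closure_eq[OF Dia.prems(1) cS]
    by (simp add: Mf_def RCw_model_def)
  moreover have "worlds (Mf S A) = worlds (RCw_model S A)" by (simp add: Mf_def RCw_model_def)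
  ultimately show ?case using Dia by simp
qed

theorem theorem5p5:
  fixes A B :: "'a fm"
  shows "deriv A B \<longleftrightarrow> sat (RCw_model (mods A \<union> mods B) A) [] B"
proof
  assume d: "deriv A B"
  let ?S = "mods A \<union> mods B"
  have SA: "mods A \<subseteq> ?S" and SB: "mods B \<subseteq> ?S" by auto
  have "sat (Mf ?S A) (id []) A"
  proof (rule tree_sat)
    show "\<forall>x\<in>tnodes A. id x \<in> worlds (Mf ?S A)" by (simp add: Mf_def)
    show "\<forall>b x y. (x,y) \<in> trel A b \<longrightarrow> (id x, id y) \<in> rel (Mf ?S A) b" by (simp add: Mf_def trel_QQ)
    show "\<forall>x p. x \<in> tnodes A \<longrightarrow> tval A x p \<longrightarrow> val (Mf ?S A) (id x) p" by (simp add: Mf_def RCw_model_def)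
  qed
  then have "sat (Mf ?S A) [] B" using soundness[OF Mf_full[OF SA] d] by simp
  then show "sat (RCw_model ?S A) [] B" using Mf_transfer[OF SA SB] by simp
next
  assume "sat (RCw_model (mods A \<union> mods B) A) [] B"
  then show "deriv A B" by (rule completeness)
qed

end
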